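(* Let $f:[0,1]\to\mathbb{R}$ be continuous on $[0,1]$ and twice differentiable on $(0,1)$, and define $g(t)=f(\tfrac12+t)$ for $t\in[-\tfrac12,\tfrac12]$. Assume: (1) $g^{(2)}(t)>0$ for $-\tfrac12<t<0$, and $g^{(2)}(0)\ge 0$; (2) $g^{(2)}(t)\ge -g^{(2)}(-t)$ for $0<t<\tfrac12$; (3) $\lim_{t\to-1/2}\frac{1}{g^{(2)}(t)}=0$; (4) the function $t\mapsto \frac{1}{g^{(2)}(t)}$ is convex on $[-\tfrac12,0)$ (its value at $-\tfrac12$ being the limit $0$ from (3)). Then $f$ is simplex-convex.
   Context: A function $f:[0,1]\to\mathbb{R}$ is called simplex-convex if for every $n\ge 1$ the function $(p_1,\dots,p_n)\mapsto f(p_1)+\dots+f(p_n)$ is convex on the simplex $\mathrm{Sim}_n(1)=\{(p_1,\dots,p_n): p_i\ge 0,\ \sum_i p_i=1\}$. *)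

theory Defs
  imports "HOL-Analysis.Analysis"
begin

definition Sim :: "nat \<Rightarrow> (nat \<Rightarrow> real) set" where
  "Sim n = {p. (\<forall>i<n. 0 \<le> p i) \<and> (\<forall>i\<ge>n. p i = 0) \<and> (\<Sum>i<n. p i) = 1}"

definition simplex_convex :: "(real \<Rightarrow> real) \<Rightarrow> bool" where
  "simplex_convex f \<longleftrightarrow>
     (\<forall>n\<ge>1. \<forall>p\<in>Sim n. \<forall>q\<in>Sim n. \<forall>u::real. 0 \<le> u \<and> u \<le> 1 \<longrightarrow>
        (\<Sum>i<n. f (u * p i + (1 - u) * q i))
          \<le> u * (\<Sum>i<n. f (p i)) + (1 - u) * (\<Sum>i<n. f (q i)))"

end

theory Submission
  imports Defs
begin

lemma phi_le:
  fixes f'' :: "real \<Rightarrow> real"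
  assumes h4: "convex_on {-1/2..<0} (\<lambda>t. if t = -1/2 then 0 else 1 / f'' (1/2 + t))"
    and y: "0 < y" "y \<le> z" "z < 1/2"
  shows "1 / f'' y \<le> (y / z) * (1 / f'' z)"
proof -
  let ?psi = "\<lambda>t. if t = -1/2 then 0 else 1 / f'' (1/2 + t)"
  have z0: "z > 0" using y by linarith
  have t0: "0 \<le> y / z" "y / z \<le> 1" using y z0 by auto
  have "?psi ((1 - y/z) *\<^sub>R (-1/2) + (y/z) *\<^sub>R (z - 1/2)) \<le> (1 - y/z) * ?psi (-1/2) + (y/z) * ?psi (z - 1/2)"
    by (rule convex_onD[OF h4 t0]) (use y in auto)
  moreover have "(1 - y/z) *\<^sub>R (-1/2) + (y/z) *\<^sub>R (z - 1/2) = y - 1/2"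
    using z0 by (simp add: field_simps)
  ultimately show ?thesis using y by auto
qed

lemma core:
  fixes f'' :: "real \<Rightarrow> real" and x v :: "nat \<Rightarrow> real"
  assumes h1a: "\<And>t. -1/2 < t \<Longrightarrow> t < 0 \<Longrightarrow> f'' (1/2 + t) > 0"
    and h1b: "f'' (1/2) \<ge> 0"
    and h2: "\<And>t. 0 < t \<Longrightarrow> t < 1/2 \<Longrightarrow> f'' (1/2 + t) \<ge> - f'' (1/2 - t)"
    and h4: "convex_on {-1/2..<0} (\<lambda>t. if t = -1/2 then 0 else 1 / f'' (1/2 + t))"
    and x0: "\<And>i. i < n \<Longrightarrow> 0 \<le> x i"
    and xs: "(\<Sum>i<n. x i) = 1"
    and vs: "(\<Sum>i<n. v i) = 0"
    and vx: "\<And>i. i < n \<Longrightarrow> v i \<noteq> 0 \<Longrightarrow> 0 < x i \<and> x i < 1"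
  shows "0 \<le> (\<Sum>i<n. f'' (x i) * (v i)^2)"
proof -
  have pos: "f'' y > 0" if "0 < y" "y < 1/2" for y
    using h1a[of "y - 1/2"] that by auto
  show ?thesis
  proof (cases "\<exists>k<n. v k \<noteq> 0 \<and> x k > 1/2")
    case False
    note nobig = False
    have "0 \<le> f'' (x i) * (v i)^2" if "i < n" for i
    proof (cases "v i = 0")
      case False
      then have "x i \<le> 1/2" "0 < x i" using nobig that vx by auto
      then have "f'' (x i) \<ge> 0"
      proof (cases "x i = 1/2")
        case True then show ?thesis using h1b by (simp only:)
      next
        case False then show ?thesis using pos[of "x i"] \<open>x i \<le> 1/2\<close> \<open>0 < x i\<close> by simp
      qed
      then show ?thesis by simp
    qed simp
    then show ?thesis by (intro sum_nonneg) auto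
  next
    case True
    then obtain k where k: "k < n" "v k \<noteq> 0" "x k > 1/2" by auto
    define S where "S = {i. i < n \<and> i \<noteq> k \<and> v i \<noteq> 0}"
    define z where "z = 1 - x k"
    have finS: "finite S" unfolding S_def by auto
    have kS: "k \<notin> S" unfolding S_def by auto
    have xk1: "x k < 1" using vx k by auto
    have z: "0 < z" "z < 1/2" using k xk1 unfolding z_def by auto
    have sumrest: "(\<Sum>i\<in>{..<n} - {k}. x i) = z"
      using xs k sum_diff1[of "{..<n}" x k] unfolding z_def by auto
    have SS: "S \<subseteq> {..<n} - {k}" unfolding S_def by auto
    have sumS: "(\<Sum>i\<in>S. x i) \<le> z"
      using sum_mono2[OF _ SS, of x] x0 sumrest by auto
    have xi: "0 < x i \<and> x i \<le> z" if "i \<in> S" for i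
    proof -
      have "x i \<le> (\<Sum>i\<in>S. x i)"
        using member_le_sum[of i S x] that finS x0 unfolding S_def by auto
      then show ?thesis using vx that sumS unfolding S_def by auto
    qed
    define a where "a i = f'' (x i)" for i
    have apos: "a i > 0" if "i \<in> S" for i
      using xi[OF that] z pos unfolding a_def by auto
    define b where "b = f'' z"
    have bpos: "b > 0" using pos z unfolding b_def by auto
    have ak: "a k \<ge> - b"
      using h2[of "x k - 1/2"] k xk1 unfolding a_def b_def z_def by (auto simp: algebra_simps)
    have inv_le: "(\<Sum>i\<in>S. 1 / a i) \<le> 1 / b"
    proof -
      have "(\<Sum>i\<in>S. 1 / a i) \<le> (\<Sum>i\<in>S. (x i / z) * (1 / b))"
        apply (rule sum_mono)
        using phi_le[OF h4, of "x _" z] xi z unfolding a_def b_def by auto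
      also have "\<dots> = (\<Sum>i\<in>S. x i) / z * (1 / b)"
        by (simp add: sum_distrib_right sum_divide_distrib)
      also have "\<dots> \<le> 1 / b"
      proof -
        have "(\<Sum>i\<in>S. x i) / z \<le> 1" using sumS z by simp
        then show ?thesis using bpos using mult_right_mono[of "(\<Sum>i\<in>S. x i) / z" 1 "1/b"] by simp
      qed
      finally show ?thesis .
    qed
    have split: "{..<n} = insert k (S \<union> ({..<n} - insert k S))" using k SS by auto
    have zero: "v i = 0" if "i \<in> {..<n} - insert k S" for i using that unfolding S_def by auto
    have vk: "v k = - (\<Sum>i\<in>S. v i)"
    proof -
      have "(\<Sum>i<n. v i) = v k + ((\<Sum>i\<in>S. v i) + (\<Sum>i\<in>{..<n} - insert k S. v i))"
        by (subst split, subst sum.insert) (use finS kS in \<open>auto intro: sum.union_disjoint\<close>)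
      then show ?thesis using vs zero by simp
    qed
    have tot: "(\<Sum>i<n. f'' (x i) * (v i)^2) = a k * (v k)^2 + (\<Sum>i\<in>S. a i * (v i)^2)"
    proof -
      have "(\<Sum>i<n. f'' (x i) * (v i)^2) = a k * (v k)^2 + ((\<Sum>i\<in>S. a i * (v i)^2) + (\<Sum>i\<in>{..<n} - insert k S. a i * (v i)^2))"
        unfolding a_def by (subst split, subst sum.insert) (use finS kS in \<open>auto intro: sum.union_disjoint\<close>)
      then show ?thesis using zero by simp
    qed
    have CS: "(\<Sum>i\<in>S. v i)^2 \<le> (\<Sum>i\<in>S. a i * (v i)^2) * (\<Sum>i\<in>S. 1 / a i)"
    proof -
      have "(\<Sum>i\<in>S. (sqrt (a i) * v i) * (1 / sqrt (a i)))^2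
          \<le> (\<Sum>i\<in>S. (sqrt (a i) * v i)^2) * (\<Sum>i\<in>S. (1 / sqrt (a i))^2)"
        by (rule Cauchy_Schwarz_ineq_sum)
      moreover have "(\<Sum>i\<in>S. (sqrt (a i) * v i) * (1 / sqrt (a i))) = (\<Sum>i\<in>S. v i)"
        by (rule sum.cong) (simp, metis apos nonzero_mult_div_cancel_left real_sqrt_gt_0_iff less_irrefl times_divide_eq_right mult.commute mult_1)
      moreover have "(\<Sum>i\<in>S. (sqrt (a i) * v i)^2) = (\<Sum>i\<in>S. a i * (v i)^2)"
        proof (rule sum.cong)
        fix i assume "i \<in> S" then have "a i > 0" by (rule apos)
        then show "(sqrt (a i) * v i)^2 = a i * (v i)^2" by (simp add: power_mult_distrib)
      qed simp
      moreover have "(\<Sum>i\<in>S. (1 / sqrt (a i))^2) = (\<Sum>i\<in>S. 1 / a i)"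
        proof (rule sum.cong)
        fix i assume "i \<in> S" then have "a i > 0" by (rule apos)
        then show "(1 / sqrt (a i))^2 = 1 / a i" by (simp add: power_divide)
      qed simp
      ultimately show ?thesis by simp
    qed
    have Q0: "0 \<le> (\<Sum>i\<in>S. a i * (v i)^2)"
      by (rule sum_nonneg) (metis apos less_eq_real_def zero_le_power2 mult_nonneg_nonneg)
    have "b * (\<Sum>i\<in>S. v i)^2 \<le> b * ((\<Sum>i\<in>S. a i * (v i)^2) * (\<Sum>i\<in>S. 1 / a i))"
      using CS bpos by simp
    also have "\<dots> \<le> b * ((\<Sum>i\<in>S. a i * (v i)^2) * (1 / b))"
      using inv_le bpos Q0 by (intro mult_left_mono) auto
    also have "\<dots> = (\<Sum>i\<in>S. a i * (v i)^2)" using bpos by simp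
    finally have "b * (v k)^2 \<le> (\<Sum>i\<in>S. a i * (v i)^2)" using vk by simp
    moreover have "- b * (v k)^2 \<le> a k * (v k)^2"
      using ak by (intro mult_right_mono) auto
    ultimately show ?thesis using tot by linarith
  qed
qed


lemma seg_in:
  fixes a b s :: real
  assumes "0 \<le> a" "a \<le> 1" "0 \<le> b" "b \<le> 1" "0 \<le> s" "s \<le> 1"
  shows "0 \<le> b + s * (a - b) \<and> b + s * (a - b) \<le> 1"
proof -
  have "b + s * (a - b) = (1 - s) * b + s * a" by (simp add: algebra_simps)
  moreover have "0 \<le> (1 - s) * b + s * a" using assms by simp
  moreover have "(1 - s) * b + s * a \<le> (1 - s) * 1 + s * 1"
    using assms by (intro add_mono mult_left_mono) auto
  ultimately show ?thesis by simp
qed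

lemma seg_open:
  fixes a b s :: real
  assumes "0 \<le> a" "a \<le> 1" "0 \<le> b" "b \<le> 1" "0 < s" "s < 1" "a \<noteq> b"
  shows "0 < b + s * (a - b) \<and> b + s * (a - b) < 1"
proof (cases "a < b")
  case True
  have h1: "0 < s * (b - a)" using True assms by simp
  have h2: "0 < (1 - s) * (b - a)" using True assms by simp
  have e1: "b + s * (a - b) = b - s * (b - a)" by (simp add: algebra_simps)
  have e2: "b + s * (a - b) = a + (1 - s) * (b - a)" by (simp add: algebra_simps)
  show ?thesis using h1 h2 e1 e2 assms by linarith
next
  case False
  then have ab: "b < a" using assms by simp
  have h1: "0 < s * (a - b)" using ab assms by simp
  have h2: "0 < (1 - s) * (a - b)" using ab assms by simp
  have e2: "b + s * (a - b) = a - (1 - s) * (a - b)" by (simp add: algebra_simps)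
  show ?thesis using h1 h2 e2 assms by linarith
qed

lemma Sim_01:
  assumes "p \<in> Sim n" "i < n"
  shows "0 \<le> p i \<and> p i \<le> 1"
proof -
  have "p i \<le> (\<Sum>j<n. p j)"
    using assms by (intro member_le_sum) (auto simp: Sim_def)
  then show ?thesis using assms by (auto simp: Sim_def)
qed

theorem theorem5p5:
  fixes f f' f'' :: "real \<Rightarrow> real"
  assumes cont: "continuous_on {0..1} f"
    and d1: "\<And>x. x \<in> {0<..<1} \<Longrightarrow> (f has_real_derivative f' x) (at x)"
    and d2: "\<And>x. x \<in> {0<..<1} \<Longrightarrow> (f' has_real_derivative f'' x) (at x)"
    and h1a: "\<And>t. -1/2 < t \<Longrightarrow> t < 0 \<Longrightarrow> f'' (1/2 + t) > 0"
    and h1b: "f'' (1/2) \<ge> 0"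
    and h2: "\<And>t. 0 < t \<Longrightarrow> t < 1/2 \<Longrightarrow> f'' (1/2 + t) \<ge> - f'' (1/2 - t)"
    and h3: "((\<lambda>t. 1 / f'' (1/2 + t)) \<longlongrightarrow> 0) (at_right (-1/2))"
    and h4: "convex_on {-1/2..<0} (\<lambda>t. if t = -1/2 then 0 else 1 / f'' (1/2 + t))"
  shows "simplex_convex f"
  unfolding simplex_convex_def
proof (intro allI impI ballI)
  fix n :: nat and p q and u :: real
  assume n: "1 \<le> n" and p: "p \<in> Sim n" and q: "q \<in> Sim n" and u: "0 \<le> u \<and> u \<le> 1"
  define v where "v i = p i - q i" for i
  define G where "G s = (\<Sum>i<n. f (q i + s * v i))" for s
  define G' where "G' s = (\<Sum>i<n. f' (q i + s * v i) * v i)" for s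
  define G'' where "G'' s = (\<Sum>i<n. f'' (q i + s * v i) * (v i)^2)" for s
  have in01: "0 \<le> q i + s * v i \<and> q i + s * v i \<le> 1" if "i < n" "0 \<le> s" "s \<le> 1" for i s
    unfolding v_def using Sim_01[OF p that(1)] Sim_01[OF q that(1)] that by (intro seg_in) auto
  have inopen: "q i + s * v i \<in> {0<..<1}" if "i < n" "0 < s" "s < 1" "v i \<noteq> 0" for i s
    unfolding v_def using Sim_01[OF p that(1)] Sim_01[OF q that(1)] that seg_open[of "p i" "q i" s]
    by (auto simp: v_def)
  have vsum: "(\<Sum>i<n. v i) = 0"
    using p q unfolding v_def Sim_def by (simp add: sum_subtractf)
  have dterm1: "((\<lambda>s. f (q i + s * v i)) has_real_derivative f' (q i + s * v i) * v i) (at s)"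
    if "i < n" "s \<in> {0<..<1}" for i s
  proof (cases "v i = 0")
    case True then show ?thesis by simp
  next
    case False
    have "((\<lambda>s. q i + s * v i) has_real_derivative v i) (at s)"
      by (auto intro!: derivative_eq_intros)
    moreover have xin: "q i + s * v i \<in> {0<..<1}" using inopen[of i s] that False by auto
    ultimately show ?thesis
      using DERIV_chain2[of f "f' (q i + s * v i)" "\<lambda>s. q i + s * v i" s, OF d1[OF xin]] by auto
  qed
  have dterm2: "((\<lambda>s. f' (q i + s * v i) * v i) has_real_derivative f'' (q i + s * v i) * (v i)^2) (at s)"
    if "i < n" "s \<in> {0<..<1}" for i s
  proof (cases "v i = 0")
    case True then show ?thesis by simp
  next
    case False
    have "((\<lambda>s. q i + s * v i) has_real_derivative v i) (at s)"
      by (auto intro!: derivative_eq_intros)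
    moreover have xin: "q i + s * v i \<in> {0<..<1}" using inopen[of i s] that False by auto
    ultimately have "((\<lambda>s. f' (q i + s * v i)) has_real_derivative f'' (q i + s * v i) * v i) (at s)"
      using DERIV_chain2[of f' "f'' (q i + s * v i)" "\<lambda>s. q i + s * v i" s, OF d2[OF xin]] by auto
    from DERIV_cmult_right[OF this, where c="v i"] show ?thesis
      by (simp add: power2_eq_square mult.assoc)
  qed
  have dG: "(G has_real_derivative G' s) (at s)" if "s \<in> {0<..<1}" for s
    unfolding G_def[abs_def] G'_def by (rule DERIV_sum) (use dterm1 that in auto)
  have dG': "(G' has_real_derivative G'' s) (at s)" if "s \<in> {0<..<1}" for s
    unfolding G'_def[abs_def] G''_def by (rule DERIV_sum) (use dterm2 that in auto)
  have G''nn: "0 \<le> G'' s" if "s \<in> {0<..<1}" for s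
    unfolding G''_def
  proof (rule core[OF h1a h1b h2 h4])
    show "0 \<le> q i + s * v i" if "i < n" for i using in01[of i s] that \<open>s \<in> _\<close> by auto
    show "(\<Sum>i<n. q i + s * v i) = 1"
      using q vsum by (simp add: sum.distrib sum_distrib_left[symmetric] Sim_def)
    show "(\<Sum>i<n. v i) = 0" by (rule vsum)
    show "0 < q i + s * v i \<and> q i + s * v i < 1" if "i < n" "v i \<noteq> 0" for i
      using inopen[of i s] that \<open>s \<in> _\<close> by auto
  qed
  have convG: "convex_on {0<..<1} G"
    by (rule f''_ge0_imp_convex[of _ _ G' G'']) (use dG dG' G''nn in auto)
  have contG: "continuous_on {0..1} G"
    unfolding G_def[abs_def]
  proof (intro continuous_on_sum)
    fix i assume i: "i \<in> {..<n}"
    show "continuous_on {0..1} (\<lambda>s. f (q i + s * v i))"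
      by (rule continuous_on_compose2[OF cont]) (use in01 i in \<open>auto intro!: continuous_intros\<close>)
  qed
  have eqL: "(\<Sum>i<n. f (u * p i + (1 - u) * q i)) = G u"
    unfolding G_def v_def by (rule sum.cong) (auto simp: algebra_simps)
  have eq1: "(\<Sum>i<n. f (p i)) = G 1" unfolding G_def v_def by simp
  have eq0: "(\<Sum>i<n. f (q i)) = G 0" unfolding G_def v_def by simp
  have "G u \<le> u * G 1 + (1 - u) * G 0"
  proof (cases "u = 0 \<or> u = 1")
    case True then show ?thesis by auto
  next
    case False
    then have u01: "0 < u" "u < 1" using u by auto
    define K where "K s = (1 - (u - s) / (1 - 2 * s)) * G s + ((u - s) / (1 - 2 * s)) * G (1 - s)" for s
    have contK: "continuous_on {0..1/3} K"
      unfolding K_def[abs_def]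
    proof (intro continuous_intros)
      show "continuous_on {0..1/3} G" by (rule continuous_on_subset[OF contG]) auto
      show "continuous_on {0..1/3} (\<lambda>s. G (1 - s))"
        by (rule continuous_on_compose2[OF contG]) (auto intro!: continuous_intros)
    qed auto
    have "(K \<longlongrightarrow> K 0) (at 0 within {0..1/3})"
      using contK by (simp add: continuous_on_def)
    then have Klim: "(K \<longlongrightarrow> K 0) (at_right 0)"
      by (simp add: at_within_Icc_at_right)
    have K0: "K 0 = u * G 1 + (1 - u) * G 0" unfolding K_def by (simp add: algebra_simps)
    have ev: "\<forall>\<^sub>F s in at_right 0. G u \<le> K s"
      unfolding eventually_at_right_field
    proof (intro exI conjI allI impI)
      show "0 < min (min u (1 - u)) (1/3)" using u01 by simp
      fix s :: real assume s: "0 < s" "s < min (min u (1 - u)) (1/3)"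
      define t where "t = (u - s) / (1 - 2 * s)"
      have den: "1 - 2 * s > 0" using s by simp
      have t0: "0 \<le> t" using s den unfolding t_def by simp
      have t1: "t \<le> 1" using s den unfolding t_def by simp
      have "G ((1 - t) *\<^sub>R s + t *\<^sub>R (1 - s)) \<le> (1 - t) * G s + t * G (1 - s)"
        by (rule convex_onD[OF convG t0 t1]) (use s in auto)
      moreover have "(1 - t) *\<^sub>R s + t *\<^sub>R (1 - s) = u"
      proof -
        have "t * (1 - 2 * s) = u - s" using den unfolding t_def by simp
        moreover have "(1 - t) *\<^sub>R s + t *\<^sub>R (1 - s) = s + t * (1 - 2 * s)"
          by (simp add: algebra_simps)
        ultimately show ?thesis by simp
      qed
      ultimately show "G u \<le> K s" unfolding K_def t_def by simp
    qed
    have "G u \<le> K 0"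
      by (rule tendsto_le[OF trivial_limit_at_right_real Klim tendsto_const ev])
    then show ?thesis using K0 by simp
  qed
  then show "(\<Sum>i<n. f (u * p i + (1 - u) * q i)) \<le> u * (\<Sum>i<n. f (p i)) + (1 - u) * (\<Sum>i<n. f (q i))"
    using eqL eq1 eq0 by simp
qed

end
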